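(* Let $k$ be a difference field of characteristic $0$ and $R=k\{y_1,\ldots,y_n\}$. If $\mathbf{u},\mathbf{v}\in\mathbb{N}[x]^n$ satisfy $\mathbf{u}\preceq\mathbf{v}$, then $\mathbf{y}^{\mathbf{v}}\in\langle\mathbf{y}^{\mathbf{u}}\rangle$.
   Context: A difference field is a field $k$ with a ring endomorphism $\sigma$; $R=k\{y_1,\ldots,y_n\}$ is the polynomial ring over $k$ in the variables $\sigma^j(y_i)$, with $\sigma$ extended naturally. For $p=\sum_ic_ix^i\in\mathbb{N}[x]$ and $a\in R$, $a^p=\prod_i(\sigma^i(a))^{c_i}$; $\mathbf{y}^{\mathbf{u}}=y_1^{u_1}\cdots y_n^{u_n}$. $\langle F\rangle$ is the smallest well-mixed $\sigma$-ideal containing $F$ (a $\sigma$-ideal $I$ is well-mixed if $ab\in I\Rightarrow a\sigma(b)\in I$). Partial order $\preceq$: for $f=\sum_{i}f_ix^i,g=\sum_ig_ix^i\in\mathbb{N}[x]$ (coefficients padded by zeros up to a common index $K$), $f\preceq g$ iff $\sum_{j=i}^Kf_j\le\sum_{j=i}^Kg_j$ for all $i=0,\ldots,K$; for vectors, $\mathbf{u}\preceq\mathbf{v}$ iff $u_i\preceq v_i$ for all $i$. *)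

theory Defs
  imports "HOL-Library.Poly_Mapping" "HOL-Computational_Algebra.Polynomial"
begin

text \<open>Difference field: a field with a ring endomorphism sigma.\<close>
definition ring_endo :: "('a::field \<Rightarrow> 'a) \<Rightarrow> bool" where
  "ring_endo \<sigma> \<longleftrightarrow> (\<forall>a b. \<sigma> (a + b) = \<sigma> a + \<sigma> b) \<and> (\<forall>a b. \<sigma> (a * b) = \<sigma> a * \<sigma> b) \<and> \<sigma> 1 = 1"

text \<open>The difference polynomial ring k{y_1..y_n}: ordinary polynomial ring over k
  in the variables sigma^j(y_i), indexed by pairs (i, j) with i in the finite type 'n.\<close>
type_synonym ('n, 'a) dpoly = "(('n \<times> nat) \<Rightarrow>\<^sub>0 nat) \<Rightarrow>\<^sub>0 'a"

definition dvar :: "'n \<Rightarrow> nat \<Rightarrow> ('n, 'a::comm_ring_1) dpoly" where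
  "dvar i j = Poly_Mapping.single (Poly_Mapping.single (i, j) 1) 1"

definition yvar :: "'n \<Rightarrow> ('n, 'a::comm_ring_1) dpoly" where
  "yvar i = dvar i 0"

definition shift_mono :: "(('n \<times> nat) \<Rightarrow>\<^sub>0 nat) \<Rightarrow> (('n \<times> nat) \<Rightarrow>\<^sub>0 nat)" where
  "shift_mono m = (\<Sum>v\<in>Poly_Mapping.keys m. Poly_Mapping.single (fst v, Suc (snd v)) (Poly_Mapping.lookup m v))"

definition sigmaR :: "('a::field \<Rightarrow> 'a) \<Rightarrow> ('n, 'a) dpoly \<Rightarrow> ('n, 'a) dpoly" where
  "sigmaR \<sigma> p = (\<Sum>m\<in>Poly_Mapping.keys p. Poly_Mapping.single (shift_mono m) (\<sigma> (Poly_Mapping.lookup p m)))"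

definition dpow :: "('a::field \<Rightarrow> 'a) \<Rightarrow> ('n, 'a) dpoly \<Rightarrow> nat poly \<Rightarrow> ('n, 'a) dpoly" where
  "dpow \<sigma> a p = (\<Prod>i\<in>{..Polynomial.degree p}. ((sigmaR \<sigma> ^^ i) a) ^ coeff p i)"

definition ymono :: "('a::field \<Rightarrow> 'a) \<Rightarrow> ('n::finite \<Rightarrow> nat poly) \<Rightarrow> ('n, 'a) dpoly" where
  "ymono \<sigma> u = (\<Prod>i\<in>UNIV. dpow \<sigma> (yvar i) (u i))"

definition is_ideal :: "'b::comm_ring_1 set \<Rightarrow> bool" where
  "is_ideal I \<longleftrightarrow> 0 \<in> I \<and> (\<forall>a\<in>I. \<forall>b\<in>I. a + b \<in> I) \<and> (\<forall>r. \<forall>a\<in>I. r * a \<in> I)"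

definition sigma_ideal :: "('a::field \<Rightarrow> 'a) \<Rightarrow> ('n, 'a) dpoly set \<Rightarrow> bool" where
  "sigma_ideal \<sigma> I \<longleftrightarrow> is_ideal I \<and> (\<forall>a\<in>I. sigmaR \<sigma> a \<in> I)"

definition well_mixed :: "('a::field \<Rightarrow> 'a) \<Rightarrow> ('n, 'a) dpoly set \<Rightarrow> bool" where
  "well_mixed \<sigma> I \<longleftrightarrow> sigma_ideal \<sigma> I \<and> (\<forall>a b. a * b \<in> I \<longrightarrow> a * sigmaR \<sigma> b \<in> I)"

definition wm_closure :: "('a::field \<Rightarrow> 'a) \<Rightarrow> ('n, 'a) dpoly set \<Rightarrow> ('n, 'a) dpoly set" where
  "wm_closure \<sigma> F = \<Inter>{I. well_mixed \<sigma> I \<and> F \<subseteq> I}"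

definition npoly_le :: "nat poly \<Rightarrow> nat poly \<Rightarrow> bool" where
  "npoly_le f g \<longleftrightarrow> (let K = max (Polynomial.degree f) (Polynomial.degree g) in
     \<forall>i\<in>{0..K}. (\<Sum>j\<in>{i..K}. coeff f j) \<le> (\<Sum>j\<in>{i..K}. coeff g j))"

definition nvec_le :: "('n \<Rightarrow> nat poly) \<Rightarrow> ('n \<Rightarrow> nat poly) \<Rightarrow> bool" where
  "nvec_le u v \<longleftrightarrow> (\<forall>i. npoly_le (u i) (v i))"

end

theory Submission
  imports Defs
begin

abbreviation mono1 :: "(('n \<times> nat) \<Rightarrow>\<^sub>0 nat) \<Rightarrow> ('n, 'a::field) dpoly" where
  "mono1 m \<equiv> Poly_Mapping.single m 1"

lemma shift_mono_single: "shift_mono (Poly_Mapping.single (i, j) (1::nat)) = Poly_Mapping.single (i, Suc j) 1"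
  by (simp add: shift_mono_def)

lemma sigmaR_dvar:
  fixes \<sigma> :: "'a::field \<Rightarrow> 'a"
  assumes "\<sigma> 1 = 1"
  shows "sigmaR \<sigma> (dvar i j :: ('n,'a::field) dpoly) = dvar i (Suc j)"
proof -
  have "shift_mono (Poly_Mapping.single (i, j) (1::nat)) = Poly_Mapping.single (i, Suc j) 1"
    by (rule shift_mono_single)
  then show ?thesis using assms by (simp add: sigmaR_def dvar_def)
qed

lemma sigmaR_iter_yvar:
  fixes \<sigma> :: "'a::field \<Rightarrow> 'a"
  assumes "\<sigma> 1 = 1"
  shows "(sigmaR \<sigma> ^^ k) (yvar i :: ('n,'a::field) dpoly) = dvar i k"
  by (induction k) (simp_all add: yvar_def sigmaR_dvar[of \<sigma>, OF assms])

lemma dvar_pow: "(dvar i k :: ('n,'a::field) dpoly) ^ c = mono1 (Poly_Mapping.single (i,k) c)"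
proof (induction c)
  case 0
  then show ?case by simp
next
  case (Suc c)
  then show ?case by (simp add: dvar_def mult_single single_add[symmetric] add.commute)
qed

lemma prod_mono1: "(\<Prod>x\<in>A. (mono1 (f x) :: ('n,'a::field) dpoly)) = mono1 (\<Sum>x\<in>A. f x)"
  by (induction A rule: infinite_finite_induct) (simp_all add: mult_single)

lemma dpow_eq:
  fixes \<sigma> :: "'a::field \<Rightarrow> 'a"
  assumes "\<sigma> 1 = 1" and "degree p < N"
  shows "dpow \<sigma> (yvar i :: ('n,'a::field) dpoly) p = mono1 (\<Sum>k<N. Poly_Mapping.single (i,k) (coeff p k))"
proof -
  have "dpow \<sigma> (yvar i :: ('n,'a::field) dpoly) p = (\<Prod>k<N. dvar i k ^ coeff p k)"
    unfolding dpow_def sigmaR_iter_yvar[of \<sigma>, OF assms(1)]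
  proof (rule prod.mono_neutral_left)
    show "\<forall>k\<in>{..<N} - {..degree p}. (dvar i k :: ('n,'a::field) dpoly) ^ coeff p k = 1"
      by (auto simp: coeff_eq_0)
  qed (use assms(2) in auto)
  also have "\<dots> = mono1 (\<Sum>k<N. Poly_Mapping.single (i,k) (coeff p k))"
    by (simp add: dvar_pow prod_mono1)
  finally show ?thesis .
qed

definition E :: "nat \<Rightarrow> ('n::finite \<Rightarrow> nat \<Rightarrow> nat) \<Rightarrow> (('n \<times> nat) \<Rightarrow>\<^sub>0 nat)" where
  "E N g = (\<Sum>l\<in>UNIV. \<Sum>k<N. Poly_Mapping.single (l,k) (g l k))"

lemma lookup_E: "Poly_Mapping.lookup (E N g) x = (if snd x < N then g (fst x) (snd x) else 0)"
proof -
  obtain l0 k0 where x: "x = (l0,k0)" by force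
  have "Poly_Mapping.lookup (E N g) x = (\<Sum>l\<in>UNIV. \<Sum>k<N. (if l = l0 \<and> k = k0 then g l k else 0))"
    unfolding E_def x lookup_sum lookup_single
    by (intro sum.cong refl) (auto simp: when_def)
  also have "\<dots> = (\<Sum>l\<in>UNIV. if l = l0 then (if k0 < N then g l k0 else 0) else 0)"
    by (intro sum.cong refl) (auto simp: sum.delta')
  also have "\<dots> = (if k0 < N then g l0 k0 else 0)" by (simp add: sum.delta')
  finally show ?thesis by (simp add: x)
qed

lemma ymono_eq:
  fixes \<sigma> :: "'a::field \<Rightarrow> 'a"
  assumes "\<sigma> 1 = 1" and "\<And>i. degree (u i) < N"
  shows "ymono \<sigma> u = (mono1 (E N (\<lambda>l k. coeff (u l) k)) :: ('n::finite,'a::field) dpoly)"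
  unfolding ymono_def E_def
  by (simp add: dpow_eq[of \<sigma>, OF assms(1) assms(2)] prod_mono1)

definition tsum :: "nat \<Rightarrow> (nat \<Rightarrow> nat) \<Rightarrow> nat \<Rightarrow> nat" where
  "tsum N a i = (\<Sum>j\<in>{i..<N}. a j)"

lemma tsum_split: "i < N \<Longrightarrow> tsum N a i = a i + tsum N a (Suc i)"
  unfolding tsum_def by (simp add: sum.atLeast_Suc_lessThan)

lemma comb1:
  fixes f :: "(nat \<Rightarrow> nat) \<Rightarrow> bool" and N :: nat
  assumes add: "\<And>a p. f a \<Longrightarrow> p < N \<Longrightarrow> f (a(p := Suc (a p)))"
    and move: "\<And>a p. f a \<Longrightarrow> a p \<ge> 1 \<Longrightarrow> Suc p < N \<Longrightarrow> f (a(p := a p - 1, Suc p := Suc (a (Suc p))))"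
    and cong: "\<And>a b. (\<forall>k<N. a k = b k) \<Longrightarrow> f a \<Longrightarrow> f b"
    and tail: "\<And>i. tsum N a i \<le> tsum N b i"
    and fa: "f a"
  shows "f b"
proof -
  have addn: "f (c(p := c p + d))" if "f c" "p < N" for c p d
  proof (induction d)
    case 0 then show ?case using that by simp
  next
    case (Suc d)
    from add[OF Suc \<open>p < N\<close>]
    have "f ((c(p := c p + d))(p := Suc ((c(p := c p + d)) p)))" .
    moreover have "(c(p := c p + d))(p := Suc ((c(p := c p + d)) p)) = c(p := c p + Suc d)" by simp
    ultimately show "f (c(p := c p + Suc d))" by simp
  qed
  have moven: "f (c(p := c p - d, Suc p := c (Suc p) + d))" if "f c" "d \<le> c p" "Suc p < N" for c p d
    using that(2)
  proof (induction d)
    case 0 then show ?case using that(1) by simp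
  next
    case (Suc d)
    let ?c = "c(p := c p - d, Suc p := c (Suc p) + d)"
    have "f ?c" using Suc.IH Suc.prems by (simp add: fun_upd_def)
    moreover have "?c p \<ge> 1" using Suc.prems by simp
    ultimately have "f (?c(p := ?c p - 1, Suc p := Suc (?c (Suc p))))"
      using move that(3) by blast
    moreover have "?c(p := ?c p - 1, Suc p := Suc (?c (Suc p))) = c(p := c p - Suc d, Suc p := c (Suc p) + Suc d)"
      by (auto simp: fun_eq_iff)
    ultimately show "f (c(p := c p - Suc d, Suc p := c (Suc p) + Suc d))" by simp
  qed
  have main: "\<forall>a. f a \<longrightarrow> (\<forall>k<N-q. a k = b k) \<longrightarrow> (\<forall>i\<ge>N-q. tsum N a i \<le> tsum N b i) \<longrightarrow> f b"
    if "q \<le> N" for q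
    using that
  proof (induction q)
    case 0
    then show ?case using cong by auto
  next
    case (Suc q)
    define p where "p = N - Suc q"
    have pN: "p < N" and Np: "N - q = Suc p" using Suc.prems by (auto simp: p_def)
    show ?case
    proof (intro allI impI)
      fix a assume fa: "f a" and agree: "\<forall>k<N - Suc q. a k = b k"
        and tl: "\<forall>i\<ge>N - Suc q. tsum N a i \<le> tsum N b i"
      have tl': "tsum N a i \<le> tsum N b i" if "i \<ge> p" for i using tl that p_def by auto
      have agree': "a k = b k" if "k < p" for k using agree that p_def by auto
      have unch: "tsum N a' i = tsum N a i" if "\<And>j. j \<ge> i \<Longrightarrow> a' j = a j" for a' i
        unfolding tsum_def using that by (intro sum.cong) auto
      obtain a' where fa': "f a'" and ag: "\<forall>k<N-q. a' k = b k" and tl2: "\<forall>i\<ge>N-q. tsum N a' i \<le> tsum N b i"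
      proof (cases "a p \<le> b p")
        case True
        let ?a = "a(p := a p + (b p - a p))"
        show ?thesis
        proof (rule that[of ?a])
          show "f ?a" using addn[OF fa pN] .
          show "\<forall>k<N-q. ?a k = b k" using agree' True Np by (auto simp: less_Suc_eq)
          show "\<forall>i\<ge>N-q. tsum N ?a i \<le> tsum N b i"
          proof (intro allI impI)
            fix i assume "i \<ge> N - q"
            then have "tsum N ?a i = tsum N a i" using Np by (intro unch) auto
            then show "tsum N ?a i \<le> tsum N b i" using tl'[of i] \<open>i \<ge> N - q\<close> Np by simp
          qed
        qed
      next
        case False
        define d where "d = a p - b p"
        have SpN: "Suc p < N"
        proof (rule ccontr)
          assume "\<not> Suc p < N"
          then have "N = Suc p" using pN by simp
          then have "tsum N a p = a p" "tsum N b p = b p" by (simp_all add: tsum_def)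
          then show False using tl'[of p] False by simp
        qed
        let ?a = "a(p := a p - d, Suc p := a (Suc p) + d)"
        show ?thesis
        proof (rule that[of ?a])
          show "f ?a" using moven[OF fa _ SpN] d_def by simp
          show "\<forall>k<N-q. ?a k = b k" using agree' False Np d_def by (auto simp: less_Suc_eq)
          show "\<forall>i\<ge>N-q. tsum N ?a i \<le> tsum N b i"
          proof (intro allI impI)
            fix i assume i: "i \<ge> N - q"
            show "tsum N ?a i \<le> tsum N b i"
            proof (cases "i = Suc p")
              case True
              have e1: "tsum N ?a (Suc (Suc p)) = tsum N a (Suc (Suc p))" by (intro unch) auto
              have "tsum N ?a (Suc p) = a (Suc p) + d + tsum N a (Suc (Suc p))"
                using tsum_split[OF SpN, of ?a] e1 by simp
              also have "\<dots> = tsum N a p - b p"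
                using tsum_split[OF SpN, of a] tsum_split[OF pN, of a] False d_def by simp
              also have "\<dots> \<le> tsum N b p - b p" using tl'[of p] by simp
              also have "\<dots> = tsum N b (Suc p)" using tsum_split[OF pN, of b] by simp
              finally show ?thesis using True by simp
            next
              case False
              then have "i > Suc p" using i Np by simp
              then have "tsum N ?a i = tsum N a i" by (intro unch) auto
              then show ?thesis using tl'[of i] \<open>i > Suc p\<close> by simp
            qed
          qed
        qed
      qed
      have "q \<le> N" using Suc.prems by simp
      from Suc.IH[OF this] fa' ag tl2 show "f b" by blast
    qed
  qed
  show ?thesis using main[of N] fa tail by simp
qed

lemma combn:
  fixes F :: "('n::finite \<Rightarrow> nat \<Rightarrow> nat) \<Rightarrow> bool" and N :: nat
  assumes add: "\<And>g l p. F g \<Longrightarrow> p < N \<Longrightarrow> F (g(l := (g l)(p := Suc (g l p))))"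
    and move: "\<And>g l p. F g \<Longrightarrow> g l p \<ge> 1 \<Longrightarrow> Suc p < N \<Longrightarrow>
        F (g(l := (g l)(p := g l p - 1, Suc p := Suc (g l (Suc p)))))"
    and cong: "\<And>g h. (\<forall>l. \<forall>k<N. g l k = h l k) \<Longrightarrow> F g \<Longrightarrow> F h"
    and tail: "\<And>l i. tsum N (a l) i \<le> tsum N (b l) i"
    and fa: "F a"
  shows "F b"
proof -
  have "finite A \<Longrightarrow> F (\<lambda>l. if l \<in> A then b l else a l)" for A
  proof (induction A rule: finite_induct)
    case empty
    then show ?case using fa by simp
  next
    case (insert l0 A)
    define G where "G = (\<lambda>l. if l \<in> A then b l else a l)"
    have "(\<lambda>c. F (G(l0 := c))) (b l0)"
    proof (rule comb1[where N=N and a="a l0" and b="b l0" and f="\<lambda>c. F (G(l0 := c))"])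
      show "F (G(l0 := c(p := Suc (c p))))" if "F (G(l0 := c))" "p < N" for c p
        using add[OF that, of l0] by simp
      show "F (G(l0 := c(p := c p - 1, Suc p := Suc (c (Suc p)))))"
        if "F (G(l0 := c))" "1 \<le> c p" "Suc p < N" for c p
        using move[OF that(1) _ that(3), of l0] that(2) by simp
      show "F (G(l0 := d))" if "\<forall>k<N. c k = d k" "F (G(l0 := c))" for c d
        using cong[OF _ that(2)] that(1) by simp
      show "tsum N (a l0) i \<le> tsum N (b l0) i" for i by (rule tail)
      have "G(l0 := a l0) = G" using insert.hyps by (auto simp: G_def fun_eq_iff)
      then show "F (G(l0 := a l0))" using insert.IH G_def by simp
    qed
    moreover have "G(l0 := b l0) = (\<lambda>l. if l \<in> insert l0 A then b l else a l)"
      by (auto simp: G_def fun_eq_iff)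
    ultimately show ?case by simp
  qed
  from this[of UNIV] show ?thesis by simp
qed

lemma E_add: "p < N \<Longrightarrow> E N (g(l := (g l)(p := Suc (g l p)))) = Poly_Mapping.single (l,p) 1 + E N g"
  by (rule poly_mapping_eqI) (auto simp: lookup_E lookup_add lookup_single when_def)

lemma E_move1: "1 \<le> g l p \<Longrightarrow> p < N \<Longrightarrow>
   E N g = E N (g(l := (g l)(p := g l p - 1))) + Poly_Mapping.single (l,p) 1"
  by (rule poly_mapping_eqI) (auto simp: lookup_E lookup_add lookup_single when_def)

lemma E_move2: "1 \<le> g l p \<Longrightarrow> Suc p < N \<Longrightarrow>
   E N (g(l := (g l)(p := g l p - 1, Suc p := Suc (g l (Suc p))))) = E N (g(l := (g l)(p := g l p - 1))) + Poly_Mapping.single (l,Suc p) 1"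
  by (rule poly_mapping_eqI) (auto simp: lookup_E lookup_add lookup_single when_def)

lemma E_cong: "(\<forall>l. \<forall>k<N. g l k = h l k) \<Longrightarrow> E N g = E N h"
  by (rule poly_mapping_eqI) (auto simp: lookup_E)

lemma tail_from_le:
  assumes "npoly_le f g" and "degree f < N" and "degree g < N"
  shows "tsum N (coeff f) i \<le> tsum N (coeff g) i"
proof -
  define K where "K = max (degree f) (degree g)"
  have KN: "K < N" using assms by (simp add: K_def)
  have ext: "(\<Sum>j\<in>{i..K}. coeff h j) = tsum N (coeff h) i" if "degree h \<le> K" for h :: "nat poly"
    unfolding tsum_def
    by (rule sum.mono_neutral_left) (use KN that in \<open>auto simp: coeff_eq_0\<close>)
  show ?thesis
  proof (cases "i \<le> K")
    case True
    then have "(\<Sum>j\<in>{i..K}. coeff f j) \<le> (\<Sum>j\<in>{i..K}. coeff g j)"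
      using assms(1) unfolding npoly_le_def Let_def K_def by auto
    then show ?thesis using ext[of f] ext[of g] by (simp add: K_def)
  next
    case False
    have "tsum N (coeff f) i = 0" unfolding tsum_def
      using False by (auto simp: K_def coeff_eq_0)
    then show ?thesis by simp
  qed
qed

theorem lemma4p4:
  fixes \<sigma> :: "'a::field_char_0 \<Rightarrow> 'a"
    and u v :: "'n::finite \<Rightarrow> nat poly"
  assumes "ring_endo \<sigma>"
    and "nvec_le u v"
  shows "ymono \<sigma> v \<in> wm_closure \<sigma> {ymono \<sigma> u}"
proof -
  have s1: "\<sigma> 1 = 1" using assms(1) by (simp add: ring_endo_def)
  define N where "N = Suc (\<Sum>i\<in>UNIV. degree (u i) + degree (v i))"
  have du: "degree (u i) < N" and dv: "degree (v i) < N" for i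
  proof -
    have "degree (u i) + degree (v i) \<le> (\<Sum>i\<in>UNIV. degree (u i) + degree (v i))"
      by (rule member_le_sum) auto
    then show "degree (u i) < N" "degree (v i) < N" by (auto simp: N_def)
  qed
  show ?thesis unfolding wm_closure_def
  proof (rule InterI)
    fix I assume "I \<in> {I. well_mixed \<sigma> I \<and> {ymono \<sigma> u} \<subseteq> I}"
    then have wm: "well_mixed \<sigma> I" and uI: "ymono \<sigma> u \<in> I" by auto
    have ideal: "is_ideal I" and sI: "\<And>a. a \<in> I \<Longrightarrow> sigmaR \<sigma> a \<in> I"
      and mix: "\<And>a b. a * b \<in> I \<Longrightarrow> a * sigmaR \<sigma> b \<in> I"
      using wm by (auto simp: well_mixed_def sigma_ideal_def)
    have mulI: "\<And>r a. a \<in> I \<Longrightarrow> r * a \<in> I" using ideal by (auto simp: is_ideal_def)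
    define F where "F = (\<lambda>g. (mono1 (E N g) :: ('n,'a) dpoly) \<in> I)"
    have "F (\<lambda>l k. coeff (v l) k)"
    proof (rule combn[where N=N and a="\<lambda>l k. coeff (u l) k" and b="\<lambda>l k. coeff (v l) k" and F=F])
      show "F (g(l := (g l)(p := Suc (g l p))))" if "F g" "p < N" for g l p
      proof -
        have "mono1 (Poly_Mapping.single (l,p) 1) * mono1 (E N g) \<in> I"
          using that mulI unfolding F_def by blast
        then show ?thesis unfolding F_def E_add[of p N g l, OF that(2)] by (simp add: mult_single)
      qed
      show "F (g(l := (g l)(p := g l p - 1, Suc p := Suc (g l (Suc p)))))"
        if "F g" "1 \<le> g l p" "Suc p < N" for g l p
      proof -
        let ?h = "g(l := (g l)(p := g l p - 1))"
        have pN: "p < N" using that(3) by simp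
        have "mono1 (E N ?h) * dvar l p \<in> I"
          using that(1) unfolding F_def E_move1[of g l p, OF that(2) pN]
          by (simp add: dvar_def mult_single)
        then have "mono1 (E N ?h) * sigmaR \<sigma> (dvar l p) \<in> I" by (rule mix)
        then have "mono1 (E N ?h) * dvar l (Suc p) \<in> I" by (simp only: sigmaR_dvar[of \<sigma>, OF s1])
        then show ?thesis unfolding F_def E_move2[of g l p, OF that(2) that(3)]
          by (simp add: dvar_def mult_single)
      qed
      show "F h" if "\<forall>l. \<forall>k<N. g l k = h l k" "F g" for g h
        using that E_cong[OF that(1)] unfolding F_def by simp
      show "tsum N (coeff (u l)) i \<le> tsum N (coeff (v l)) i" for l i
        using tail_from_le assms(2) du dv unfolding nvec_le_def by blast
      show "F (\<lambda>l k. coeff (u l) k)" using uI ymono_eq[where \<sigma>=\<sigma> and u=u and N=N, OF s1 du] unfolding F_def by simp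
    qed
    then show "ymono \<sigma> v \<in> I" using ymono_eq[where \<sigma>=\<sigma> and u=v and N=N, OF s1 dv] unfolding F_def by simp
  qed
qed

end
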